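(* Let $\mathcal P,\mathcal Q$ be two matroids on the same finite ground set, and let $\mathcal D=\mathcal P\cap\mathcal Q$. Let $S,T\in\mathcal D$ be two sets of the same size $g$. Then there exist an ordering $s_1,\ldots,s_g$ of the elements of $S$ and an ordering $t_1,\ldots,t_g$ of the elements of $T$ such that for every $i=1,\ldots,g$ the set $S-s_1+t_1-s_2+t_2-\cdots+t_{i-1}-s_i$ belongs to $\mathcal D$, where the operations are performed left to right, $X+x$ denotes $X\cup\{x\}$ and $X-a$ denotes $X\setminus\{a\}$.
   Context: A simplicial complex is a family of subsets of a ground set closed under taking subsets. A matroid is a complex in which, for every subset $W$ of the ground set, all maximal members contained in $W$ have the same size. $\mathcal D=\mathcal P\cap\mathcal Q$ means $A\in\mathcal D$ iff $A\in\mathcal P$ and $A\in\mathcal Q$. *)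

theory Defs
  imports Main
begin

definition simplicial_complex :: "'a set \<Rightarrow> 'a set set \<Rightarrow> bool" where
  "simplicial_complex E F \<longleftrightarrow> F \<subseteq> Pow E \<and> (\<forall>A\<in>F. \<forall>B. B \<subseteq> A \<longrightarrow> B \<in> F)"

definition maximal_in :: "'a set set \<Rightarrow> 'a set \<Rightarrow> 'a set \<Rightarrow> bool" where
  "maximal_in F W A \<longleftrightarrow> A \<in> F \<and> A \<subseteq> W \<and> (\<forall>B\<in>F. A \<subseteq> B \<and> B \<subseteq> W \<longrightarrow> B = A)"

definition matroid :: "'a set \<Rightarrow> 'a set set \<Rightarrow> bool" where
  "matroid E F \<longleftrightarrow> simplicial_complex E F \<and>
     (\<forall>W \<subseteq> E. \<forall>A B. maximal_in F W A \<and> maximal_in F W B \<longrightarrow> card A = card B)"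

text \<open>exch_set S s t i = S - s_1 + t_1 - s_2 + t_2 - ... + t_(i-1) - s_i,
  lists 0-indexed, operations performed left to right.\<close>
fun exch_set :: "'a set \<Rightarrow> 'a list \<Rightarrow> 'a list \<Rightarrow> nat \<Rightarrow> 'a set" where
  "exch_set X s t 0 = X"
| "exch_set X s t (Suc 0) = X - {s ! 0}"
| "exch_set X s t (Suc (Suc i)) = (insert (t ! i) (exch_set X s t (Suc i))) - {s ! Suc i}"

end

theory Submission
  imports Defs
begin

lemma mat_sub: "matroid E F \<Longrightarrow> A \<in> F \<Longrightarrow> B \<subseteq> A \<Longrightarrow> B \<in> F"
  unfolding matroid_def simplicial_complex_def by blast

lemma mat_pow: "matroid E F \<Longrightarrow> A \<in> F \<Longrightarrow> A \<subseteq> E"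
  unfolding matroid_def simplicial_complex_def by blast

lemma mat_eq: "matroid E F \<Longrightarrow> W \<subseteq> E \<Longrightarrow> maximal_in F W A \<Longrightarrow> maximal_in F W B \<Longrightarrow> card A = card B"
  unfolding matroid_def by blast

lemma mat_ext:
  assumes "finite E" "matroid E F" "A \<in> F" "A \<subseteq> W" "W \<subseteq> E"
  shows "\<exists>M. maximal_in F W M \<and> A \<subseteq> M"
proof -
  let ?K = "\<lambda>B. B \<in> F \<and> A \<subseteq> B \<and> B \<subseteq> W"
  have fW: "finite W" using finite_subset[OF assms(5,1)] .
  have "\<forall>y. ?K y \<longrightarrow> card y < card W + 1"
  proof (intro allI impI)
    fix y assume "?K y"
    then have "card y \<le> card W" using card_mono[OF fW] by blast
    then show "card y < card W + 1" by simp
  qed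
  from ex_has_greatest_nat[of ?K A card, OF _ this] assms
  obtain M where M: "?K M" "\<And>y. ?K y \<Longrightarrow> card y \<le> card M" by blast
  have "maximal_in F W M"
    unfolding maximal_in_def
  proof (intro conjI ballI impI)
    fix B assume B: "B \<in> F" "M \<subseteq> B \<and> B \<subseteq> W"
    then have "card B \<le> card M" using M by blast
    moreover have "finite B" using B(2) fW finite_subset by auto
    moreover have "card M \<le> card B" using card_mono[OF \<open>finite B\<close>] B by blast
    ultimately show "B = M" using card_subset_eq[OF \<open>finite B\<close>, of M] B by simp
  qed (use M in auto)
  then show ?thesis using M by blast
qed

lemma mat_aug:
  assumes "finite E" "matroid E F" "A \<in> F" "B \<in> F" "card A < card B"
  shows "\<exists>b\<in>B - A. insert b A \<in> F"
proof -
  have W: "A \<union> B \<subseteq> E" using mat_pow[OF assms(2,3)] mat_pow[OF assms(2,4)] by simp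
  obtain M1 where M1: "maximal_in F (A \<union> B) M1" "A \<subseteq> M1"
    using mat_ext[OF assms(1,2,3) _ W] by blast
  obtain M2 where M2: "maximal_in F (A \<union> B) M2" "B \<subseteq> M2"
    using mat_ext[OF assms(1,2,4) _ W] by blast
  have "card M1 = card M2" using mat_eq[OF assms(2) W M1(1) M2(1)] .
  moreover have "M2 \<subseteq> E" using M2(1) W unfolding maximal_in_def by auto
  then have "finite M2" using finite_subset assms(1) by auto
  moreover have "card B \<le> card M2" using card_mono[OF \<open>finite M2\<close> M2(2)] .
  ultimately have "card B \<le> card M1" by simp
  then have "M1 \<noteq> A" using assms(5) by auto
  then obtain b where b: "b \<in> M1" "b \<notin> A" using M1 by blast
  then have "b \<in> B" using M1 unfolding maximal_in_def by blast
  moreover have "M1 \<in> F" using M1(1) unfolding maximal_in_def by simp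
  moreover have "insert b A \<subseteq> M1" using b M1(2) by simp
  ultimately have "insert b A \<in> F" using mat_sub[OF assms(2)] by blast
  moreover have "b \<in> B" using b M1 unfolding maximal_in_def by blast
  ultimately show ?thesis using b by blast
qed

lemma mat_circ:
  assumes "finite E" "matroid E F" "A \<in> F" "insert t A \<notin> F" "B \<in> F" "t \<in> B" "B \<subseteq> insert t A"
  shows "\<exists>x\<in>A - B. insert t (A - {x}) \<in> F"
proof -
  have W: "insert t A \<subseteq> E" using mat_pow[OF assms(2,3)] mat_pow[OF assms(2,5)] assms(6) by auto
  have fA: "finite (insert t A)" using finite_subset[OF W assms(1)] .
  have tA: "t \<notin> A" using assms(3,4) by (auto simp: insert_absorb)
  obtain M where M: "maximal_in F (insert t A) M" "B \<subseteq> M"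
    using mat_ext[OF assms(1,2,5) assms(7) W] by blast
  have mA: "maximal_in F (insert t A) A"
    unfolding maximal_in_def
  proof (intro conjI ballI impI)
    fix C assume C: "C \<in> F" "A \<subseteq> C \<and> C \<subseteq> insert t A"
    then have "C \<noteq> insert t A" using assms(4) by blast
    have "t \<notin> C"
    proof
      assume "t \<in> C"
      then have "insert t A \<subseteq> C" using C by blast
      then show False using C \<open>C \<noteq> insert t A\<close> by blast
    qed
    then show "C = A" using C by blast
  qed (use assms in auto)
  have cM: "card M = card A" using mat_eq[OF assms(2) W M(1) mA] .
  have Msub: "M \<subseteq> insert t A" using M unfolding maximal_in_def by blast
  have "card (insert t A) = card A + 1" using tA fA by simp
  then have "M \<noteq> insert t A" using cM by auto
  then obtain x where x: "x \<in> insert t A" "x \<notin> M" using Msub by blast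
  have xt: "x \<noteq> t" using x M assms(6) by blast
  have xA: "x \<in> A" using x xt by blast
  have xB: "x \<notin> B" using x M by blast
  have sub: "M \<subseteq> insert t (A - {x})" using Msub x by blast
  have fA0: "finite A" using fA by simp
  have "card (insert t (A - {x})) = Suc (card (A - {x}))" using tA fA0 by simp
  also have "... = card A" using xA fA0 card_Suc_Diff1 by metis
  finally have "card (insert t (A - {x})) = card A" .
  then have "M = insert t (A - {x})" using card_subset_eq[OF _ sub] fA0 cM by simp
  then show ?thesis using xA xB M unfolding maximal_in_def by blast
qed


lemma exch_formula:
  assumes cross: "\<forall>j<length t. \<forall>k<length s. t ! j = s ! k \<longrightarrow> j = k"
  shows "i < length s \<Longrightarrow> i \<le> length t \<Longrightarrow>
    exch_set X s t (Suc i) = (X - set (take (Suc i) s)) \<union> set (take i t)"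
proof (induction i)
  case 0
  then show ?case by (cases s) auto
next
  case (Suc i)
  have IH: "exch_set X s t (Suc i) = (X - set (take (Suc i) s)) \<union> set (take i t)"
    using Suc by simp
  have ts: "take (Suc i) t = take i t @ [t ! i]" using Suc.prems by (simp add: take_Suc_conv_app_nth)
  have ss: "take (Suc (Suc i)) s = take (Suc i) s @ [s ! Suc i]" using Suc.prems by (simp add: take_Suc_conv_app_nth)
  have nin: "s ! Suc i \<notin> set (take (Suc i) t)"
  proof
    assume "s ! Suc i \<in> set (take (Suc i) t)"
    then obtain j where j: "j < length (take (Suc i) t)" "take (Suc i) t ! j = s ! Suc i"
      by (auto simp: in_set_conv_nth)
    then have "j < Suc i" "j < length t" "t ! j = s ! Suc i" by auto
    then have "j = Suc i" using cross Suc.prems(1) by blast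
    then show False using \<open>j < Suc i\<close> by simp
  qed
  show ?case using IH ts ss nin by auto
qed

lemma exch_step:
  assumes "finite E" "matroid E P" "matroid E Q"
    and "U \<union> X \<in> P" "U \<union> X \<in> Q" "U \<union> T \<in> P" "U \<union> T \<in> Q"
    and "U \<inter> X = {}" "U \<inter> T = {}" "X \<inter> T = {}"
    and "card X = Suc k" "card T = Suc (Suc k)"
  shows "\<exists>t\<in>T. \<exists>x\<in>X. insert t (U \<union> (X - {x})) \<in> P \<and> insert t (U \<union> (X - {x})) \<in> Q"
proof -
  have fUX: "finite (U \<union> X)" using mat_pow[OF assms(2,4)] finite_subset assms(1) by auto
  have fUT: "finite (U \<union> T)" using mat_pow[OF assms(2,6)] finite_subset assms(1) by auto
  have "card (U \<union> X) = card U + card X" using fUX assms(8) by (simp add: card_Un_disjoint)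
  moreover have "card (U \<union> T) = card U + card T" using fUT assms(9) by (simp add: card_Un_disjoint)
  ultimately have "card (U \<union> X) < card (U \<union> T)" using assms(11,12) by simp
  then obtain b where b: "b \<in> (U \<union> T) - (U \<union> X)" "insert b (U \<union> X) \<in> P"
    using mat_aug[OF assms(1,2,4,6)] by blast
  have bT: "b \<in> T" using b by blast
  have bX: "b \<notin> X" "b \<notin> U" using b by auto
  have Xne: "X \<noteq> {}" using assms(11) by auto
  show ?thesis
  proof (cases "insert b (U \<union> X) \<in> Q")
    case True
    obtain x where x: "x \<in> X" using Xne by blast
    have "insert b (U \<union> (X - {x})) \<subseteq> insert b (U \<union> X)" by blast
    then show ?thesis using mat_sub[OF assms(2) b(2)] mat_sub[OF assms(3) True] bT x by blast
  next
    case False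
    have B: "insert b U \<in> Q" using mat_sub[OF assms(3,7)] bT by blast
    obtain x where x: "x \<in> (U \<union> X) - insert b U" "insert b ((U \<union> X) - {x}) \<in> Q"
      using mat_circ[OF assms(1,3,5) False B] by blast
    have xX: "x \<in> X" using x by blast
    have eq: "(U \<union> X) - {x} = U \<union> (X - {x})" using x by blast
    have "insert b (U \<union> (X - {x})) \<subseteq> insert b (U \<union> X)" by blast
    then show ?thesis using mat_sub[OF assms(2) b(2)] x(2) eq bT xX by auto
  qed
qed

lemma chainH:
  assumes "finite E" "matroid E P" "matroid E Q"
  shows "U \<union> X \<in> P \<Longrightarrow> U \<union> X \<in> Q \<Longrightarrow> U \<union> T \<in> P \<Longrightarrow> U \<union> T \<in> Q \<Longrightarrow>
    U \<inter> X = {} \<Longrightarrow> U \<inter> T = {} \<Longrightarrow> X \<inter> T = {} \<Longrightarrow> card X = k \<Longrightarrow> card T = Suc k \<Longrightarrow>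
    \<exists>xs ts. distinct xs \<and> set xs = X \<and> length xs = k \<and> distinct ts \<and> set ts = T \<and> length ts = Suc k \<and>
      (\<forall>j\<le>k. U \<union> (X - set (take j xs)) \<union> set (take j ts) \<in> P \<and>
                U \<union> (X - set (take j xs)) \<union> set (take j ts) \<in> Q)"
proof (induction k arbitrary: U X T)
  case 0
  have fX: "finite X" using mat_pow[OF assms(2) "0.prems"(1)] finite_subset assms(1) by auto
  have fT: "finite T" using mat_pow[OF assms(2) "0.prems"(3)] finite_subset assms(1) by auto
  have X0: "X = {}" using fX "0.prems"(8) by simp
  obtain ts where ts: "distinct ts" "set ts = T" using finite_distinct_list[OF fT] by blast
  have "length ts = Suc 0" using distinct_card[OF ts(1)] ts(2) "0.prems"(9) by simp
  then show ?case using ts X0 "0.prems"(1,2) by auto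
next
  case (Suc k)
  obtain t x where t: "t \<in> T" and x: "x \<in> X"
    and tx: "insert t (U \<union> (X - {x})) \<in> P" "insert t (U \<union> (X - {x})) \<in> Q"
    using exch_step[OF assms Suc.prems] by blast
  have fX: "finite X" using mat_pow[OF assms(2) Suc.prems(1)] finite_subset assms(1) by auto
  have fT: "finite T" using mat_pow[OF assms(2) Suc.prems(3)] finite_subset assms(1) by auto
  have tX: "t \<notin> X" "t \<notin> U" using t Suc.prems(6,7) by auto
  have e1: "insert t U \<union> (X - {x}) = insert t (U \<union> (X - {x}))" by blast
  have e2: "insert t U \<union> (T - {t}) = U \<union> T" using t by blast
  have c1: "card (X - {x}) = k" using Suc.prems(8) x fX by simp
  have c2: "card (T - {t}) = Suc k" using Suc.prems(9) t fT by simp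
  obtain xs ts where H: "distinct xs" "set xs = X - {x}" "length xs = k" "distinct ts" "set ts = T - {t}"
    "length ts = Suc k"
    "\<forall>j\<le>k. insert t U \<union> ((X - {x}) - set (take j xs)) \<union> set (take j ts) \<in> P \<and>
            insert t U \<union> ((X - {x}) - set (take j xs)) \<union> set (take j ts) \<in> Q"
  proof -
    have p1: "insert t U \<union> (X - {x}) \<in> P" "insert t U \<union> (X - {x}) \<in> Q" using e1 tx by simp_all
    have p2: "insert t U \<union> (T - {t}) \<in> P" "insert t U \<union> (T - {t}) \<in> Q" using e2 Suc.prems(3,4) by simp_all
    have d: "insert t U \<inter> (X - {x}) = {}" "insert t U \<inter> (T - {t}) = {}" "(X - {x}) \<inter> (T - {t}) = {}"
      using tX Suc.prems(5,6,7) by blast+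
    show ?thesis using Suc.IH[OF p1 p2 d c1 c2] that by blast
  qed
  have "\<forall>j\<le>Suc k. U \<union> (X - set (take j (x # xs))) \<union> set (take j (t # ts)) \<in> P \<and>
          U \<union> (X - set (take j (x # xs))) \<union> set (take j (t # ts)) \<in> Q"
  proof (intro allI impI)
    fix j assume j: "j \<le> Suc k"
    show "U \<union> (X - set (take j (x # xs))) \<union> set (take j (t # ts)) \<in> P \<and>
          U \<union> (X - set (take j (x # xs))) \<union> set (take j (t # ts)) \<in> Q"
    proof (cases j)
      case 0
      then show ?thesis using Suc.prems(1,2) by simp
    next
      case (Suc j')
      then have "j' \<le> k" using j by simp
      then have h: "insert t U \<union> ((X - {x}) - set (take j' xs)) \<union> set (take j' ts) \<in> P \<and>
            insert t U \<union> ((X - {x}) - set (take j' xs)) \<union> set (take j' ts) \<in> Q" using H(7) by blast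
      have "U \<union> (X - set (take j (x # xs))) \<union> set (take j (t # ts)) =
            insert t U \<union> ((X - {x}) - set (take j' xs)) \<union> set (take j' ts)" using Suc by auto
      then show ?thesis using h by simp
    qed
  qed
  then show ?case using H x t
    by (intro exI[of _ "x # xs"] exI[of _ "t # ts"]) (auto simp del: take_Suc_Cons)
qed


lemma distinct_cross: "distinct cs \<Longrightarrow> \<forall>j<length cs. \<forall>k<length cs. cs ! j = cs ! k \<longrightarrow> j = k"
  using nth_eq_iff_index_eq by blast

theorem theorem3p1:
  fixes E :: "'a set" and P Q :: "'a set set" and S T :: "'a set" and g :: nat
  assumes "finite E"
    and "matroid E P" and "matroid E Q"
    and "S \<in> P \<inter> Q" and "T \<in> P \<inter> Q"
    and "card S = g" and "card T = g"
  shows "\<exists>s t. distinct s \<and> set s = S \<and> length s = g \<and>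
               distinct t \<and> set t = T \<and> length t = g \<and>
               (\<forall>i\<in>{1..g}. exch_set S s t i \<in> P \<inter> Q)"
proof -
  have SP: "S \<in> P" "S \<in> Q" "T \<in> P" "T \<in> Q" using assms(4,5) by auto
  have fS: "finite S" using mat_pow[OF assms(2) SP(1)] finite_subset assms(1) by auto
  have fT: "finite T" using mat_pow[OF assms(2) SP(3)] finite_subset assms(1) by auto
  obtain cs where cs: "distinct cs" "set cs = S \<inter> T" using finite_distinct_list[of "S \<inter> T"] fS by blast
  have lcs: "length cs = card (S \<inter> T)" using distinct_card[OF cs(1)] cs(2) by simp
  show ?thesis
  proof (cases "S \<subseteq> T")
    case True
    have "S = T" using card_subset_eq[OF fT True] assms(6,7) by simp
    then have cs2: "set cs = S" using cs by simp
    have len: "length cs = g" using distinct_card[OF cs(1)] cs2 assms(6) by simp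
    have "\<forall>i\<in>{1..g}. exch_set S cs cs i \<in> P \<inter> Q"
    proof
      fix i assume i: "i \<in> {1..g}"
      then obtain i' where i': "i = Suc i'" "i' < g" by (cases i) auto
      have "exch_set S cs cs i = (S - set (take (Suc i') cs)) \<union> set (take i' cs)"
        using exch_formula[OF distinct_cross[OF cs(1)]] i' len by simp
      also have "... \<subseteq> S" using cs2 set_take_subset by fastforce
      finally show "exch_set S cs cs i \<in> P \<inter> Q" using mat_sub[OF assms(2) SP(1)] mat_sub[OF assms(3) SP(2)] by blast
    qed
    then show ?thesis using cs(1) cs2 len \<open>S = T\<close> by blast
  next
    case False
    then obtain s0 where s0: "s0 \<in> S" "s0 \<notin> T" by blast
    define U where "U = S \<inter> T"
    define X where "X = S - T - {s0}"
    define T' where "T' = T - S"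
    have cST: "card (S - T) = g - card (S \<inter> T)" using card_Diff_subset_Int[of S T] fS assms(6) by simp
    have cTS: "card (T - S) = g - card (S \<inter> T)" using card_Diff_subset_Int[of T S] fT assms(7)
      by (simp add: Int_commute)
    have cle: "card (S \<inter> T) \<le> g" using card_mono[OF fS, of "S \<inter> T"] assms(6) by simp
    have pos: "card (S - T) \<ge> 1" using s0 fS card_0_eq[of "S - T"] by (metis Diff_iff empty_iff finite_Diff less_one not_le)
    define k where "k = card X"
    have ck: "Suc k = card (S - T)" unfolding k_def X_def using s0 fS pos by simp
    have cT': "card T' = Suc k" unfolding T'_def using ck cST cTS by simp
    have e1: "U \<union> X = S - {s0}" unfolding U_def X_def using s0 by blast
    have e2: "U \<union> T' = T" unfolding U_def T'_def by blast
    have h1: "U \<union> X \<in> P" "U \<union> X \<in> Q" using e1 mat_sub[OF assms(2) SP(1)] mat_sub[OF assms(3) SP(2)] by auto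
    have h2: "U \<union> T' \<in> P" "U \<union> T' \<in> Q" using e2 SP by auto
    have d: "U \<inter> X = {}" "U \<inter> T' = {}" "X \<inter> T' = {}" unfolding U_def X_def T'_def by blast+
    obtain xs ts where H: "distinct xs" "set xs = X" "length xs = k" "distinct ts" "set ts = T'"
      "length ts = Suc k"
      "\<forall>j\<le>k. U \<union> (X - set (take j xs)) \<union> set (take j ts) \<in> P \<and>
              U \<union> (X - set (take j xs)) \<union> set (take j ts) \<in> Q"
      using chainH[OF assms(1,2,3) h1 h2 d k_def[symmetric] cT'] by blast
    define c where "c = length cs"
    define s where "s = cs @ s0 # xs"
    define t where "t = cs @ ts"
    have gk: "g = c + Suc k" unfolding c_def using lcs ck cST cle by simp
    have ds: "distinct s" unfolding s_def using cs H s0 unfolding X_def by auto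
    have ss: "set s = S" unfolding s_def using cs H s0 unfolding X_def by auto
    have ls: "length s = g" unfolding s_def using gk H c_def by simp
    have dt: "distinct t" unfolding t_def using cs H unfolding T'_def by auto
    have st: "set t = T" unfolding t_def using cs H unfolding T'_def by auto
    have lt: "length t = g" unfolding t_def using gk H c_def by simp
    have sk1: "\<And>k. k < c \<Longrightarrow> s ! k = cs ! k" unfolding s_def c_def by (simp add: nth_append)
    have sk2: "\<And>k. k < length s \<Longrightarrow> c \<le> k \<Longrightarrow> s ! k \<in> S - T"
    proof -
      fix k assume k: "k < length s" "c \<le> k"
      then have "s ! k = (s0 # xs) ! (k - c)" unfolding s_def c_def by (simp add: nth_append)
      moreover have "k - c < length (s0 # xs)" using k unfolding s_def c_def by simp
      ultimately have "s ! k \<in> set (s0 # xs)" by (metis nth_mem)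
      then show "s ! k \<in> S - T" using H s0 unfolding X_def by auto
    qed
    have tk1: "\<And>k. k < c \<Longrightarrow> t ! k = cs ! k" unfolding t_def c_def by (simp add: nth_append)
    have tk2: "\<And>k. k < length t \<Longrightarrow> c \<le> k \<Longrightarrow> t ! k \<in> T - S"
    proof -
      fix k assume k: "k < length t" "c \<le> k"
      then have "t ! k = ts ! (k - c)" unfolding t_def c_def by (simp add: nth_append)
      moreover have "k - c < length ts" using k unfolding t_def c_def by simp
      ultimately have "t ! k \<in> set ts" by simp
      then show "t ! k \<in> T - S" using H unfolding T'_def by auto
    qed
    have cross: "\<forall>j<length t. \<forall>k<length s. t ! j = s ! k \<longrightarrow> j = k"
    proof (intro allI impI)
      fix j k assume jk: "j < length t" "k < length s" "t ! j = s ! k"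
      show "j = k"
      proof (cases "j < c")
        case True
        then have tj: "t ! j \<in> S \<inter> T" using tk1 cs c_def by (metis nth_mem)
        show ?thesis
        proof (cases "k < c")
          case True
          then show ?thesis using \<open>j < c\<close> tk1 sk1 jk cs(1) c_def nth_eq_iff_index_eq by metis
        next
          case False
          then show ?thesis using sk2[of k] jk tj by auto
        qed
      next
        case False
        then have "t ! j \<in> T - S" using tk2[of j] jk(1) by simp
        moreover have "s ! k \<in> S" using ss jk nth_mem by blast
        ultimately show ?thesis using jk by auto
      qed
    qed
    have "\<forall>i\<in>{1..g}. exch_set S s t i \<in> P \<inter> Q"
    proof
      fix i assume i: "i \<in> {1..g}"
      then obtain i' where i': "i = Suc i'" "i' < g" by (cases i) auto
      have form: "exch_set S s t i = (S - set (take (Suc i') s)) \<union> set (take i' t)"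
        using exch_formula[OF cross] i' ls lt by simp
      show "exch_set S s t i \<in> P \<inter> Q"
      proof (cases "i' < c")
        case True
        then have "take i' t = take i' cs" unfolding t_def c_def by simp
        then have "set (take i' t) \<subseteq> S" using cs set_take_subset by fastforce
        then have "exch_set S s t i \<subseteq> S" using form by blast
        then show ?thesis using mat_sub[OF assms(2) SP(1)] mat_sub[OF assms(3) SP(2)] by blast
      next
        case False
        define j where "j = i' - c"
        have j: "i' = c + j" "j \<le> k" using False gk i' unfolding j_def by auto
        have t1: "take (Suc i') s = cs @ s0 # take j xs" unfolding s_def c_def using j c_def by simp
        have t2: "take i' t = cs @ take j ts" unfolding t_def c_def using j c_def by simp
        have "exch_set S s t i = U \<union> (X - set (take j xs)) \<union> set (take j ts)"
          unfolding form t1 t2 using cs s0 H unfolding U_def X_def T'_def by auto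
        then show ?thesis using H(7) j by auto
      qed
    qed
    then show ?thesis using ds ss ls dt st lt by blast
  qed
qed

end
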